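(* Let $\epsilon>0$. For all $\widehat\phi_1,\widehat\phi_2\in\mathcal{M}_\epsilon$ with $\widehat\phi_1\le\widehat\phi_2$ entrywise, one has $\widehat\Psi(\widehat\phi_1)\ge\widehat\Psi(\widehat\phi_2)$ entrywise.
   Context: Discrete setting: $\Omega=(0,1)$, $T>0$, $\sigma>0$; $m_0:[0,1]\to\mathbb{R}$ bounded with $m_0\ge0$. $f:[0,1]\times\mathbb{R}\to\mathbb{R}$ is continuous and nonincreasing in its second variable, bounded, and $f\le0$. For positive integers $I,J$: $\Delta t=T/I$, $\Delta x=1/J$, $x_j=j\Delta x$. $\mathcal{M}$ is the set of real matrices $(m_{i,j})_{0\le i\le I,0\le j\le J}$, $\mathcal{M}_\epsilon=\{m\in\mathcal{M}: m_{i,j}\ge\epsilon\ \forall i,j\}$. For $\widehat\phi\in\mathcal{M}_\epsilon$, $\widehat\Psi(\widehat\phi)$ is the unique $\widehat\psi\in\mathcal{M}$ with $\widehat\psi_{0,j}=m_0(x_j)/\widehat\phi_{0,j}$ and, for $0\le i\le I-1$, $0\le j\le J$, $\frac{\widehat\psi_{i+1,j}-\widehat\psi_{i,j}}{\Delta t}-\frac{\sigma^2}{2}\frac{\widehat\psi_{i+1,j+1}-2\widehat\psi_{i+1,j}+\widehat\psi_{i+1,j-1}}{(\Delta x)^2}=\frac{1}{\sigma^2}f(x_j,\widehat\phi_{i+1,j}\widehat\psi_{i+1,j})\widehat\psi_{i+1,j}$, with conventions $\widehat\psi_{i,-1}=\widehat\psi_{i,0}$, $\widehat\psi_{i,J+1}=\widehat\psi_{i,J}$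 (existence, uniqueness and $\widehat\psi\ge0$ being known). *)

theory Defs
  imports "HOL-Analysis.Analysis"
begin

text \<open>Matrices (m_{i,j}), 0 <= i <= I, 0 <= j <= J, are represented as functions
  nat => nat => real; only entries with i <= I, j <= J are meaningful.
  Grid: dt = T/I, dx = 1/J, x_j = j*dx.\<close>

definition in_M_eps :: "nat \<Rightarrow> nat \<Rightarrow> real \<Rightarrow> (nat \<Rightarrow> nat \<Rightarrow> real) \<Rightarrow> bool" where
  "in_M_eps I J \<epsilon> m \<longleftrightarrow> (\<forall>i\<le>I. \<forall>j\<le>J. m i j \<ge> \<epsilon>)"

text \<open>The discrete scheme defining Psi-hat(phi); Neumann conventions
  psi_{i,-1} = psi_{i,0}, psi_{i,J+1} = psi_{i,J}.\<close>
definition psi_scheme ::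
  "real \<Rightarrow> real \<Rightarrow> nat \<Rightarrow> nat \<Rightarrow> (real \<Rightarrow> real) \<Rightarrow> (real \<Rightarrow> real \<Rightarrow> real)
   \<Rightarrow> (nat \<Rightarrow> nat \<Rightarrow> real) \<Rightarrow> (nat \<Rightarrow> nat \<Rightarrow> real) \<Rightarrow> bool" where
  "psi_scheme T \<sigma> I J m0 f \<phi> \<psi> \<longleftrightarrow>
     (let dt = T / real I; dx = 1 / real J; x = (\<lambda>j::nat. real j * dx) in
      (\<forall>j\<le>J. \<psi> 0 j = m0 (x j) / \<phi> 0 j) \<and>
      (\<forall>i<I. \<forall>j\<le>J.
         (let left = (if j = 0 then \<psi> (i+1) 0 else \<psi> (i+1) (j-1));
              right = (if j = J then \<psi> (i+1) J else \<psi> (i+1) (j+1)) in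
          (\<psi> (i+1) j - \<psi> i j) / dt
            - \<sigma>\<^sup>2 / 2 * ((right - 2 * \<psi> (i+1) j + left) / dx\<^sup>2)
          = 1 / \<sigma>\<^sup>2 * f (x j) (\<phi> (i+1) j * \<psi> (i+1) j) * \<psi> (i+1) j)))"

text \<open>Psi-hat(phi): the unique solution of the scheme (entries outside the index
  range normalised to 0 so that the description is unique).\<close>
definition Psi_hat ::
  "real \<Rightarrow> real \<Rightarrow> nat \<Rightarrow> nat \<Rightarrow> (real \<Rightarrow> real) \<Rightarrow> (real \<Rightarrow> real \<Rightarrow> real)
   \<Rightarrow> (nat \<Rightarrow> nat \<Rightarrow> real) \<Rightarrow> (nat \<Rightarrow> nat \<Rightarrow> real)" where
  "Psi_hat T \<sigma> I J m0 f \<phi> =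
     (THE \<psi>. psi_scheme T \<sigma> I J m0 f \<phi> \<psi> \<and> (\<forall>i j. (I < i \<or> J < j) \<longrightarrow> \<psi> i j = 0))"

end

theory Submission imports Defs begin

definition nbl :: "(nat \<Rightarrow> real) \<Rightarrow> nat \<Rightarrow> real" where
  "nbl u j = (if j = 0 then u 0 else u (j-1))"
definition nbr :: "nat \<Rightarrow> (nat \<Rightarrow> real) \<Rightarrow> nat \<Rightarrow> real" where
  "nbr J u j = (if j = J then u J else u (j+1))"

definition stepeq :: "real \<Rightarrow> real \<Rightarrow> real \<Rightarrow> nat \<Rightarrow> (nat \<Rightarrow> real \<Rightarrow> real)
   \<Rightarrow> (nat \<Rightarrow> real) \<Rightarrow> (nat \<Rightarrow> real) \<Rightarrow> (nat \<Rightarrow> real) \<Rightarrow> bool" where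
  "stepeq dt dx \<sigma> J g p a u \<longleftrightarrow> (\<forall>j\<le>J. (u j - a j) / dt
     - \<sigma>\<^sup>2 / 2 * ((nbr J u j - 2 * u j + nbl u j) / dx\<^sup>2)
     = 1 / \<sigma>\<^sup>2 * g j (p j * u j) * u j)"

lemma psi_scheme_iff:
  "psi_scheme T \<sigma> I J m0 f \<phi> \<psi> \<longleftrightarrow>
    (\<forall>j\<le>J. \<psi> 0 j = m0 (real j * (1 / real J)) / \<phi> 0 j) \<and>
    (\<forall>i<I. stepeq (T / real I) (1 / real J) \<sigma> J (\<lambda>j. f (real j * (1 / real J)))
              (\<phi> (i+1)) (\<psi> i) (\<psi> (i+1)))"
  unfolding psi_scheme_def stepeq_def nbl_def nbr_def Let_def by simp

lemma argmin_ex: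
  fixes w :: "nat \<Rightarrow> real"
  shows "\<exists>j\<le>J. \<forall>k\<le>J. w j \<le> w k"
proof -
  let ?m = "Min (w ` {..J})"
  have "?m \<in> w ` {..J}" by (rule Min_in) auto
  then obtain j where "j \<in> {..J}" "?m = w j" by (rule imageE)
  moreover have "\<forall>k\<le>J. ?m \<le> w k" by (intro allI impI Min_le) auto
  ultimately show ?thesis by force
qed

lemma nb_min:
  assumes "j \<le> J" "\<forall>k\<le>J. u j - v j \<le> u k - v k"
  shows "nbl u j - nbl v j \<ge> u j - v j" "nbr J u j - nbr J v j \<ge> u j - v j"
  using assms unfolding nbl_def nbr_def by auto

lemma nonlin:
  fixes g :: "real \<Rightarrow> real"
  assumes "antimono g" "\<forall>y. g y \<le> 0" "p1 \<le> p2" "0 \<le> p2" "u \<le> v" "0 \<le> v"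
  shows "g (p1 * u) * u \<ge> g (p2 * v) * v"
proof (cases "u \<ge> 0")
  case True
  have "p1 * u \<le> p2 * v" using assms True
    by (meson mult_left_mono mult_right_mono order_trans)
  hence "g (p1 * u) \<ge> g (p2 * v)" using assms(1) by (simp add: antimonoD)
  hence "g (p1 * u) * u \<ge> g (p2 * v) * u" using True by (simp add: mult_right_mono)
  moreover have "g (p2 * v) * u \<ge> g (p2 * v) * v" using assms(2,5)
    by (simp add: mult_left_mono_neg)
  ultimately show ?thesis by linarith
next
  case False
  have "g (p1 * u) * u \<ge> 0" using False assms(2) by (simp add: mult_nonpos_nonpos)
  moreover have "g (p2 * v) * v \<le> 0" using assms(2,6) by (simp add: mult_nonpos_nonneg)
  ultimately show ?thesis by linarith
qed

lemma step_pos: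
  assumes "stepeq dt dx \<sigma> J g p a u" "dt > 0" "\<forall>j\<le>J. a j \<ge> 0"
    "\<forall>j\<le>J. \<forall>y. g j y \<le> 0"
  shows "\<forall>j\<le>J. u j \<ge> 0"
proof -
  obtain j where j: "j \<le> J" "\<forall>k\<le>J. u j \<le> u k" using argmin_ex by blast
  have nb: "nbl u j \<ge> u j" "nbr J u j \<ge> u j"
    using nb_min[of j J u "\<lambda>_. 0"] j by (auto simp: nbl_def nbr_def)
  have "u j \<ge> 0"
  proof (rule ccontr)
    assume neg: "\<not> u j \<ge> 0"
    have eq: "(u j - a j) / dt - \<sigma>\<^sup>2 / 2 * ((nbr J u j - 2 * u j + nbl u j) / dx\<^sup>2)
       = 1 / \<sigma>\<^sup>2 * g j (p j * u j) * u j" using assms(1) j unfolding stepeq_def by auto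
    have "u j - a j < 0" using neg assms(3) j by force
    hence "(u j - a j) / dt < 0" using assms(2) by (simp add: divide_neg_pos)
    moreover have "\<sigma>\<^sup>2 / 2 * ((nbr J u j - 2 * u j + nbl u j) / dx\<^sup>2) \<ge> 0"
      using nb by simp
    moreover have "1 / \<sigma>\<^sup>2 * g j (p j * u j) * u j \<ge> 0"
      using neg assms(4) j by (simp add: mult_nonpos_nonpos)
    ultimately show False using eq by linarith
  qed
  thus ?thesis using j by force
qed

lemma step_cmp:
  assumes "stepeq dt dx \<sigma> J g p1 a u" "stepeq dt dx \<sigma> J g p2 b v" "dt > 0"
    "\<forall>j\<le>J. a j \<ge> b j" "\<forall>j\<le>J. v j \<ge> 0"
    "\<forall>j\<le>J. p1 j \<le> p2 j" "\<forall>j\<le>J. p2 j \<ge> 0"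
    "\<forall>j\<le>J. \<forall>y. g j y \<le> 0" "\<forall>j\<le>J. antimono (g j)"
  shows "\<forall>j\<le>J. u j \<ge> v j"
proof -
  obtain j where j: "j \<le> J" "\<forall>k\<le>J. u j - v j \<le> u k - v k"
    using argmin_ex[of J "\<lambda>k. u k - v k"] by blast
  have nb: "nbl u j - nbl v j \<ge> u j - v j" "nbr J u j - nbr J v j \<ge> u j - v j"
    using nb_min[OF j] by auto
  have "u j \<ge> v j"
  proof (rule ccontr)
    assume neg: "\<not> u j \<ge> v j"
    have eq1: "(u j - a j) / dt - \<sigma>\<^sup>2 / 2 * ((nbr J u j - 2 * u j + nbl u j) / dx\<^sup>2)
       = 1 / \<sigma>\<^sup>2 * g j (p1 j * u j) * u j" using assms(1) j unfolding stepeq_def by auto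
    have eq2: "(v j - b j) / dt - \<sigma>\<^sup>2 / 2 * ((nbr J v j - 2 * v j + nbl v j) / dx\<^sup>2)
       = 1 / \<sigma>\<^sup>2 * g j (p2 j * v j) * v j" using assms(2) j unfolding stepeq_def by auto
    have "(u j - a j) - (v j - b j) < 0" using neg assms(4) j by auto
    hence "((u j - a j) - (v j - b j)) / dt < 0" using assms(3) by (simp add: divide_neg_pos)
    hence A: "(u j - a j) / dt - (v j - b j) / dt < 0" by (simp add: diff_divide_distrib)
    have "(nbr J u j - 2 * u j + nbl u j) - (nbr J v j - 2 * v j + nbl v j) \<ge> 0"
      using nb by linarith
    hence "\<sigma>\<^sup>2 / 2 * (((nbr J u j - 2 * u j + nbl u j) - (nbr J v j - 2 * v j + nbl v j)) / dx\<^sup>2) \<ge> 0"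
      by simp
    hence B: "\<sigma>\<^sup>2 / 2 * ((nbr J u j - 2 * u j + nbl u j) / dx\<^sup>2)
        - \<sigma>\<^sup>2 / 2 * ((nbr J v j - 2 * v j + nbl v j) / dx\<^sup>2) \<ge> 0"
      by (simp add: diff_divide_distrib right_diff_distrib)
    have "g j (p1 j * u j) * u j \<ge> g j (p2 j * v j) * v j"
      using nonlin[of "g j" "p1 j" "p2 j" "u j" "v j"] assms(5-9) j neg by auto
    hence C: "1 / \<sigma>\<^sup>2 * g j (p1 j * u j) * u j \<ge> 1 / \<sigma>\<^sup>2 * g j (p2 j * v j) * v j"
      by (simp add: divide_right_mono)
    show False using A B C eq1 eq2 by linarith
  qed
  thus ?thesis using j by force
qed


primrec sh :: "(nat \<Rightarrow> real \<Rightarrow> real) \<Rightarrow> real \<Rightarrow> real \<Rightarrow> nat \<Rightarrow> real \<times> real" where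
  "sh q k s 0 = (s, k * q 0 s)"
| "sh q k s (Suc n) = (fst (sh q k s n) + snd (sh q k s n),
     snd (sh q k s n) + k * q (Suc n) (fst (sh q k s n) + snd (sh q k s n)))"

lemma sh_eq:
  assumes "J > 0" "snd (sh q k s J) = 0" "j \<le> J"
  shows "nbr J (\<lambda>j. fst (sh q k s j)) j - 2 * fst (sh q k s j) + nbl (\<lambda>j. fst (sh q k s j)) j
         = k * q j (fst (sh q k s j))"
proof (cases j)
  case 0
  then show ?thesis using assms by (simp add: nbl_def nbr_def)
next
  case (Suc n)
  show ?thesis
  proof (cases "j = J")
    case True
    have JJ: "J = Suc n" using True Suc by simp
    have "snd (sh q k s (Suc n)) = 0" using assms JJ by simp
    then show ?thesis unfolding JJ Suc by (simp add: nbl_def nbr_def)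
  next
    case False
    then show ?thesis using Suc by (simp add: nbl_def nbr_def)
  qed
qed

lemma sh_up:
  assumes "\<forall>j\<le>J. \<forall>v\<ge>s. q j v \<ge> 0" "k \<ge> 0"
  shows "n \<le> J \<Longrightarrow> fst (sh q k s n) \<ge> s \<and> snd (sh q k s n) \<ge> 0"
proof (induction n)
  case 0
  then show ?case using assms by simp
next
  case (Suc n)
  then have "fst (sh q k s n) \<ge> s" "snd (sh q k s n) \<ge> 0" by auto
  moreover have "q (Suc n) (fst (sh q k s n) + snd (sh q k s n)) \<ge> 0"
    using assms(1) Suc.prems calculation by auto
  ultimately show ?case using assms(2) by simp
qed

lemma sh_down:
  assumes "\<forall>j\<le>J. \<forall>v\<le>s. q j v \<le> 0" "k \<ge> 0"
  shows "n \<le> J \<Longrightarrow> fst (sh q k s n) \<le> s \<and> snd (sh q k s n) \<le> 0"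
proof (induction n)
  case 0
  then show ?case using assms by (simp add: mult_nonneg_nonpos)
next
  case (Suc n)
  then have "fst (sh q k s n) \<le> s" "snd (sh q k s n) \<le> 0" by auto
  moreover have "q (Suc n) (fst (sh q k s n) + snd (sh q k s n)) \<le> 0"
    using assms(1) Suc.prems calculation by auto
  moreover have "k * q (Suc n) (fst (sh q k s n) + snd (sh q k s n)) \<le> 0"
    using assms(2) calculation(3) by (rule mult_nonneg_nonpos)
  ultimately show ?case by simp
qed

lemma sh_cont:
  assumes "\<forall>j\<le>J. continuous_on UNIV (q j)"
  shows "n \<le> J \<Longrightarrow> continuous_on UNIV (\<lambda>s. fst (sh q k s n)) \<and> continuous_on UNIV (\<lambda>s. snd (sh q k s n))"
proof (induction n)
  case 0
  have "continuous_on UNIV (\<lambda>s. q 0 s)" using assms by auto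
  then show ?case by (auto intro!: continuous_intros)
next
  case (Suc n)
  then have c1: "continuous_on UNIV (\<lambda>s. fst (sh q k s n))" and c2: "continuous_on UNIV (\<lambda>s. snd (sh q k s n))" by auto
  have c3: "continuous_on UNIV (\<lambda>s. fst (sh q k s n) + snd (sh q k s n))"
    using c1 c2 by (rule continuous_on_add)
  have "continuous_on UNIV (q (Suc n))" using assms Suc.prems by auto
  hence c4: "continuous_on UNIV (\<lambda>s. q (Suc n) (fst (sh q k s n) + snd (sh q k s n)))"
    by (rule continuous_on_compose2[OF _ c3]) simp
  show ?case using c3 c2 c4 by (auto intro!: continuous_intros)
qed

lemma step_exists:
  assumes "dt > 0" "dx > 0" "\<sigma> > 0" "J > 0"
    "\<forall>j\<le>J. \<forall>y. g j y \<le> 0" "\<forall>j\<le>J. continuous_on UNIV (g j)"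
  shows "\<exists>u. stepeq dt dx \<sigma> J g p a u"
proof -
  define q where "q = (\<lambda>j v. (v - a j) / dt - 1 / \<sigma>\<^sup>2 * g j (p j * v) * v)"
  define k where "k = 2 * dx\<^sup>2 / \<sigma>\<^sup>2"
  define B where "B = (\<Sum>j\<le>J. \<bar>a j\<bar>)"
  have k0: "k \<ge> 0" unfolding k_def by simp
  have aB: "\<bar>a j\<bar> \<le> B" if "j \<le> J" for j
    unfolding B_def by (rule member_le_sum) (use that in auto)
  have B0: "B \<ge> 0" unfolding B_def by (simp add: sum_nonneg)
  have qup: "\<forall>j\<le>J. \<forall>v\<ge>B. q j v \<ge> 0"
  proof (intro allI impI)
    fix j v assume j: "j \<le> J" and v: "v \<ge> B"
    have "v - a j \<ge> 0" using aB[OF j] v by linarith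
    hence "(v - a j) / dt \<ge> 0" using assms(1) by simp
    moreover have "g j (p j * v) * v \<le> 0" using assms(5) j v B0
      by (simp add: mult_nonpos_nonneg)
    hence "1 / \<sigma>\<^sup>2 * g j (p j * v) * v \<le> 0"
      using assms(3) by (simp add: divide_nonpos_pos)
    ultimately show "q j v \<ge> 0" unfolding q_def by linarith
  qed
  have qdown: "\<forall>j\<le>J. \<forall>v\<le>-B. q j v \<le> 0"
  proof (intro allI impI)
    fix j v assume j: "j \<le> J" and v: "v \<le> -B"
    have "v - a j \<le> 0" using aB[OF j] v by linarith
    hence "(v - a j) / dt \<le> 0" using assms(1) by (simp add: divide_nonpos_pos)
    moreover have "g j (p j * v) * v \<ge> 0" using assms(5) j v B0
      by (simp add: mult_nonpos_nonpos)
    hence "1 / \<sigma>\<^sup>2 * g j (p j * v) * v \<ge> 0"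
      by simp
    ultimately show "q j v \<le> 0" unfolding q_def by linarith
  qed
  have qc: "\<forall>j\<le>J. continuous_on UNIV (q j)"
  proof (intro allI impI)
    fix j assume j: "j \<le> J"
    have "continuous_on UNIV (\<lambda>v. g j (p j * v))"
      by (rule continuous_on_compose2[of UNIV "g j"]) (use assms(6) j in \<open>auto intro!: continuous_intros\<close>)
    then show "continuous_on UNIV (q j)" unfolding q_def using assms(1,3) by (auto intro!: continuous_intros)
  qed
  have R1: "snd (sh q k B J) \<ge> 0" using sh_up[OF qup k0] by auto
  have R0: "snd (sh q k (-B) J) \<le> 0" using sh_down[OF qdown k0] by auto
  have cR: "continuous_on {-B..B} (\<lambda>s. snd (sh q k s J))"
    using sh_cont[OF qc, of J k] continuous_on_subset by blast
  obtain s where s: "snd (sh q k s J) = 0"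
    using IVT'[of "\<lambda>s. snd (sh q k s J)" "-B" 0 B, OF R0 R1 _ cR] B0 by auto
  define u where "u = (\<lambda>j. fst (sh q k s j))"
  have "stepeq dt dx \<sigma> J g p a u"
    unfolding stepeq_def
  proof (intro allI impI)
    fix j assume j: "j \<le> J"
    have e: "nbr J u j - 2 * u j + nbl u j = k * q j (u j)"
      unfolding u_def using sh_eq[OF assms(4) s j] .
    have "\<sigma>\<^sup>2 / 2 * ((nbr J u j - 2 * u j + nbl u j) / dx\<^sup>2) = q j (u j)"
      unfolding e k_def using assms(2,3) by (simp add: field_simps)
    then show "(u j - a j) / dt - \<sigma>\<^sup>2 / 2 * ((nbr J u j - 2 * u j + nbl u j) / dx\<^sup>2)
       = 1 / \<sigma>\<^sup>2 * g j (p j * u j) * u j" unfolding q_def by linarith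
  qed
  then show ?thesis by blast
qed


lemma stepeq_cong:
  assumes "\<forall>j\<le>J. u j = u' j" "\<forall>j\<le>J. a j = a' j"
  shows "stepeq dt dx \<sigma> J g p a u \<longleftrightarrow> stepeq dt dx \<sigma> J g p a' u'"
proof -
  have "nbl u j = nbl u' j \<and> nbr J u j = nbr J u' j" if "j \<le> J" for j
    using assms(1) that unfolding nbl_def nbr_def by auto
  then show ?thesis unfolding stepeq_def using assms by (metis (no_types, lifting))
qed

lemma scheme_mono:
  fixes T \<sigma> :: real and I J :: nat and m0 :: "real \<Rightarrow> real" and f :: "real \<Rightarrow> real \<Rightarrow> real"
  assumes "T > 0" "I > 0"
    and S1: "psi_scheme T \<sigma> I J m0 f \<phi>1 \<psi>1" and S2: "psi_scheme T \<sigma> I J m0 f \<phi>2 \<psi>2"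
    and ph: "\<forall>i\<le>I. \<forall>j\<le>J. 0 < \<phi>1 i j \<and> \<phi>1 i j \<le> \<phi>2 i j"
    and m: "\<forall>j\<le>J. m0 (real j * (1 / real J)) \<ge> 0"
    and g1: "\<forall>j\<le>J. \<forall>y. f (real j * (1 / real J)) y \<le> 0"
    and g2: "\<forall>j\<le>J. antimono (f (real j * (1 / real J)))"
  shows "i \<le> I \<Longrightarrow> \<forall>j\<le>J. \<psi>2 i j \<le> \<psi>1 i j \<and> 0 \<le> \<psi>2 i j"
proof (induction i)
  case 0
  show ?case
  proof (intro allI impI)
    fix j assume j: "j \<le> J"
    have e1: "\<psi>1 0 j = m0 (real j * (1 / real J)) / \<phi>1 0 j" using S1 j unfolding psi_scheme_iff by auto
    have e2: "\<psi>2 0 j = m0 (real j * (1 / real J)) / \<phi>2 0 j" using S2 j unfolding psi_scheme_iff by auto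
    have p: "0 < \<phi>1 0 j" "\<phi>1 0 j \<le> \<phi>2 0 j" using ph j by auto
    have mj: "m0 (real j * (1 / real J)) \<ge> 0" using m j by auto
    show "\<psi>2 0 j \<le> \<psi>1 0 j \<and> 0 \<le> \<psi>2 0 j"
      unfolding e1 e2 using p mj by (auto intro: divide_left_mono)
  qed
next
  case (Suc i)
  hence IH: "\<forall>j\<le>J. \<psi>2 i j \<le> \<psi>1 i j \<and> 0 \<le> \<psi>2 i j" and iI: "i < I" by auto
  let ?g = "\<lambda>j. f (real j * (1 / real J))"
  have st1: "stepeq (T / real I) (1 / real J) \<sigma> J ?g (\<phi>1 (i+1)) (\<psi>1 i) (\<psi>1 (i+1))"
    using S1 iI unfolding psi_scheme_iff by auto
  have st2: "stepeq (T / real I) (1 / real J) \<sigma> J ?g (\<phi>2 (i+1)) (\<psi>2 i) (\<psi>2 (i+1))"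
    using S2 iI unfolding psi_scheme_iff by auto
  have dt: "T / real I > 0" using assms(1,2) by simp
  have pos: "\<forall>j\<le>J. \<psi>2 (i+1) j \<ge> 0"
    by (rule step_pos[OF st2 dt]) (use IH g1 in auto)
  have p1: "\<forall>j\<le>J. \<phi>1 (i+1) j \<le> \<phi>2 (i+1) j" "\<forall>j\<le>J. 0 \<le> \<phi>2 (i+1) j"
    using ph Suc.prems by (auto, fastforce)
  have cmp: "\<forall>j\<le>J. \<psi>1 (i+1) j \<ge> \<psi>2 (i+1) j"
    by (rule step_cmp[OF st1 st2 dt]) (use IH g1 g2 pos p1 in auto)
  show ?case using pos cmp by simp
qed


primrec build :: "real \<Rightarrow> real \<Rightarrow> nat \<Rightarrow> nat \<Rightarrow> (real \<Rightarrow> real) \<Rightarrow> (real \<Rightarrow> real \<Rightarrow> real)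
   \<Rightarrow> (nat \<Rightarrow> nat \<Rightarrow> real) \<Rightarrow> nat \<Rightarrow> nat \<Rightarrow> real" where
  "build T \<sigma> I J m0 f \<phi> 0 = (\<lambda>j. m0 (real j * (1 / real J)) / \<phi> 0 j)"
| "build T \<sigma> I J m0 f \<phi> (Suc i) = (SOME u. stepeq (T / real I) (1 / real J) \<sigma> J
      (\<lambda>j. f (real j * (1 / real J))) (\<phi> (Suc i)) (build T \<sigma> I J m0 f \<phi> i) u)"

lemma scheme_exists:
  fixes T \<sigma> :: real and I J :: nat and m0 :: "real \<Rightarrow> real" and f :: "real \<Rightarrow> real \<Rightarrow> real"
  assumes "T > 0" "I > 0" "\<sigma> > 0" "J > 0"
    and g1: "\<forall>j\<le>J. \<forall>y. f (real j * (1 / real J)) y \<le> 0"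
    and g3: "\<forall>j\<le>J. continuous_on UNIV (f (real j * (1 / real J)))"
  shows "\<exists>\<psi>. psi_scheme T \<sigma> I J m0 f \<phi> \<psi> \<and> (\<forall>i j. (I < i \<or> J < j) \<longrightarrow> \<psi> i j = 0)"
proof -
  let ?b = "build T \<sigma> I J m0 f \<phi>"
  define \<psi> where "\<psi> = (\<lambda>i j. if i \<le> I \<and> j \<le> J then ?b i j else 0)"
  have dt: "T / real I > 0" "1 / real J > 0" using assms by auto
  have st: "stepeq (T / real I) (1 / real J) \<sigma> J (\<lambda>j. f (real j * (1 / real J))) (\<phi> (Suc i)) (?b i) (?b (Suc i))" for i
  proof -
    have "\<exists>u. stepeq (T / real I) (1 / real J) \<sigma> J (\<lambda>j. f (real j * (1 / real J))) (\<phi> (Suc i)) (?b i) u"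
      by (rule step_exists[OF dt assms(3,4)]) (use g1 g3 in auto)
    then show ?thesis by (simp add: someI_ex)
  qed
  have "psi_scheme T \<sigma> I J m0 f \<phi> \<psi>"
    unfolding psi_scheme_iff
  proof (intro conjI allI impI)
    fix j assume "j \<le> J" then show "\<psi> 0 j = m0 (real j * (1 / real J)) / \<phi> 0 j"
      unfolding \<psi>_def by simp
  next
    fix i assume i: "i < I"
    have "stepeq (T / real I) (1 / real J) \<sigma> J (\<lambda>j. f (real j * (1 / real J))) (\<phi> (i+1)) (\<psi> i) (\<psi> (i+1))
       \<longleftrightarrow> stepeq (T / real I) (1 / real J) \<sigma> J (\<lambda>j. f (real j * (1 / real J))) (\<phi> (i+1)) (?b i) (?b (i+1))"
      by (rule stepeq_cong) (use i in \<open>auto simp: \<psi>_def\<close>)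
    then show "stepeq (T / real I) (1 / real J) \<sigma> J (\<lambda>j. f (real j * (1 / real J))) (\<phi> (i+1)) (\<psi> i) (\<psi> (i+1))"
      using st[of i] by simp
  qed
  moreover have "\<forall>i j. (I < i \<or> J < j) \<longrightarrow> \<psi> i j = 0" unfolding \<psi>_def by auto
  ultimately show ?thesis by blast
qed

theorem proposition10:
  fixes T \<sigma> \<epsilon> :: real and I J :: nat
    and m0 :: "real \<Rightarrow> real" and f :: "real \<Rightarrow> real \<Rightarrow> real"
    and \<phi>1 \<phi>2 :: "nat \<Rightarrow> nat \<Rightarrow> real"
  assumes "T > 0" and "\<sigma> > 0" and "I > 0" and "J > 0"
    and "bounded (m0 ` {0..1})" and "\<forall>x\<in>{0..1}. m0 x \<ge> 0"
    and "continuous_on ({0..1} \<times> UNIV) (\<lambda>(x, y). f x y)"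
    and "\<forall>x\<in>{0..1}. antimono (f x)"
    and "bounded ((\<lambda>(x, y). f x y) ` ({0..1} \<times> UNIV))"
    and "\<forall>x\<in>{0..1}. \<forall>y. f x y \<le> 0"
    and "\<epsilon> > 0"
    and "in_M_eps I J \<epsilon> \<phi>1" and "in_M_eps I J \<epsilon> \<phi>2"
    and "\<forall>i\<le>I. \<forall>j\<le>J. \<phi>1 i j \<le> \<phi>2 i j"
  shows "\<forall>i\<le>I. \<forall>j\<le>J. Psi_hat T \<sigma> I J m0 f \<phi>1 i j \<ge> Psi_hat T \<sigma> I J m0 f \<phi>2 i j"
proof -
  have xin: "real j * (1 / real J) \<in> {0..1}" if "j \<le> J" for j
    using that assms(4) by (auto simp: field_simps)
  have m: "\<forall>j\<le>J. m0 (real j * (1 / real J)) \<ge> 0" using assms(6) xin by auto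
  have g1: "\<forall>j\<le>J. \<forall>y. f (real j * (1 / real J)) y \<le> 0" using assms(10) xin by auto
  have g2: "\<forall>j\<le>J. antimono (f (real j * (1 / real J)))" using assms(8) xin by auto
  have g3: "\<forall>j\<le>J. continuous_on UNIV (f (real j * (1 / real J)))"
  proof (intro allI impI)
    fix j assume j: "j \<le> J"
    let ?x = "real j * (1 / real J)"
    have "continuous_on UNIV (\<lambda>y. (\<lambda>(x, y). f x y) (?x, y))"
      by (rule continuous_on_compose2[OF assms(7)]) (use xin[OF j] in \<open>auto intro!: continuous_intros\<close>)
    then show "continuous_on UNIV (f ?x)" by simp
  qed
  have unique: "\<And>\<phi> \<psi> \<psi>'. \<forall>i\<le>I. \<forall>j\<le>J. 0 < \<phi> i j \<Longrightarrow>
      psi_scheme T \<sigma> I J m0 f \<phi> \<psi> \<and> (\<forall>i j. (I < i \<or> J < j) \<longrightarrow> \<psi> i j = 0) \<Longrightarrow>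
      psi_scheme T \<sigma> I J m0 f \<phi> \<psi>' \<and> (\<forall>i j. (I < i \<or> J < j) \<longrightarrow> \<psi>' i j = 0) \<Longrightarrow> \<psi> = \<psi>'"
  proof -
    fix \<phi> \<psi> \<psi>'
    assume p: "\<forall>i\<le>I. \<forall>j\<le>J. 0 < \<phi> i j"
      and A: "psi_scheme T \<sigma> I J m0 f \<phi> \<psi> \<and> (\<forall>i j. (I < i \<or> J < j) \<longrightarrow> \<psi> i j = 0)"
      and B: "psi_scheme T \<sigma> I J m0 f \<phi> \<psi>' \<and> (\<forall>i j. (I < i \<or> J < j) \<longrightarrow> \<psi>' i j = 0)"
    have p': "\<forall>i\<le>I. \<forall>j\<le>J. 0 < \<phi> i j \<and> \<phi> i j \<le> \<phi> i j" using p by auto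
    have "\<psi> i j = \<psi>' i j" for i j
    proof (cases "i \<le> I \<and> j \<le> J")
      case True
      have "\<psi>' i j \<le> \<psi> i j"
        using scheme_mono[OF assms(1,3) conjunct1[OF A] conjunct1[OF B] p' m g1 g2, of i] True by auto
      moreover have "\<psi> i j \<le> \<psi>' i j"
        using scheme_mono[OF assms(1,3) conjunct1[OF B] conjunct1[OF A] p' m g1 g2, of i] True by auto
      ultimately show ?thesis by simp
    next
      case False
      then show ?thesis using A B by auto
    qed
    then show "\<psi> = \<psi>'" by blast
  qed
  have ph1: "\<forall>i\<le>I. \<forall>j\<le>J. 0 < \<phi>1 i j" using assms(11,12) unfolding in_M_eps_def by force
  have ph2: "\<forall>i\<le>I. \<forall>j\<le>J. 0 < \<phi>2 i j" using assms(11,13) unfolding in_M_eps_def by force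
  have spec: "psi_scheme T \<sigma> I J m0 f \<phi> (Psi_hat T \<sigma> I J m0 f \<phi>)"
    if "\<forall>i\<le>I. \<forall>j\<le>J. 0 < \<phi> i j" for \<phi>
  proof -
    obtain \<psi> where P: "psi_scheme T \<sigma> I J m0 f \<phi> \<psi> \<and> (\<forall>i j. (I < i \<or> J < j) \<longrightarrow> \<psi> i j = 0)"
      using scheme_exists[OF assms(1,3,2,4) g1 g3] by blast
    have "psi_scheme T \<sigma> I J m0 f \<phi> (Psi_hat T \<sigma> I J m0 f \<phi>) \<and>
       (\<forall>i j. (I < i \<or> J < j) \<longrightarrow> Psi_hat T \<sigma> I J m0 f \<phi> i j = 0)"
      unfolding Psi_hat_def 
      apply (rule theI[where a=\<psi>])
       apply (rule P)
      apply (erule unique[OF that])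
      apply (rule P)
      done
    then show ?thesis by blast
  qed
  have p12: "\<forall>i\<le>I. \<forall>j\<le>J. 0 < \<phi>1 i j \<and> \<phi>1 i j \<le> \<phi>2 i j" using ph1 assms(14) by auto
  show ?thesis
    using scheme_mono[OF assms(1,3) spec[OF ph1] spec[OF ph2] p12 m g1 g2] by auto
qed

end
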